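(* There is $N$ such that for every $n\ge N$ the following holds. Let $R(x)=(2n-1)T_{2n+1}(x)+(2n+1)T_{2n-1}(x)$. For every positive root $\zeta$ of $U'_{2n-1}$ other than the smallest positive root, $R$ has a root in the interval $\left[\zeta-\frac{2}{5n^2\zeta},\ \zeta\right)$.
   Context: $T_m,U_m$ are Chebyshev polynomials of the first and second kind: $T_m(\cos\theta)=\cos m\theta$, $U_m(\cos\theta)=\sin((m+1)\theta)/\sin\theta$. *)

theory Defs
  imports "HOL-Computational_Algebra.Polynomial"
begin

fun cheb_T :: "nat \<Rightarrow> real poly" where
  "cheb_T 0 = 1"
| "cheb_T (Suc 0) = [:0, 1:]"
| "cheb_T (Suc (Suc m)) = [:0, 2:] * cheb_T (Suc m) - cheb_T m"

fun cheb_U :: "nat \<Rightarrow> real poly" where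
  "cheb_U 0 = 1"
| "cheb_U (Suc 0) = [:0, 2:]"
| "cheb_U (Suc (Suc m)) = [:0, 2:] * cheb_U (Suc m) - cheb_U m"

end

theory Submission imports Defs "HOL-Analysis.Analysis" begin

lemma cheb_T_cos: "poly (cheb_T m) (cos t) = cos (real m * t)"
proof (induction m rule: cheb_T.induct)
  case 1 then show ?case by simp
next
  case 2 then show ?case by simp
next
  case (3 m)
  have e: "cos (real (Suc (Suc m)) * t) = 2 * cos t * cos (real (Suc m) * t) - cos (real m * t)"
  proof -
    have a: "real (Suc (Suc m)) * t = real (Suc m) * t + t" by (simp add: algebra_simps)
    have b: "real m * t = real (Suc m) * t - t" by (simp add: algebra_simps)
    show ?thesis unfolding a b cos_add cos_diff by (simp add: algebra_simps)
  qed
  have "poly (cheb_T (Suc (Suc m))) (cos t) = 2 * cos t * poly (cheb_T (Suc m)) (cos t) - poly (cheb_T m) (cos t)"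
    by simp
  also have "\<dots> = 2 * cos t * cos (real (Suc m) * t) - cos (real m * t)" using 3 by simp
  finally show ?case using e by simp
qed

lemma cheb_U_sin: "poly (cheb_U m) (cos t) * sin t = sin (real (Suc m) * t)"
proof (induction m rule: cheb_U.induct)
  case 1 then show ?case by simp
next
  case 2 then show ?case by (simp add: sin_double)
next
  case (3 m)
  have e: "sin (real (Suc (Suc (Suc m))) * t) = 2 * cos t * sin (real (Suc (Suc m)) * t) - sin (real (Suc m) * t)"
  proof -
    have a: "real (Suc (Suc (Suc m))) * t = real (Suc (Suc m)) * t + t" by (simp add: algebra_simps)
    have b: "real (Suc m) * t = real (Suc (Suc m)) * t - t" by (simp add: algebra_simps)
    show ?thesis unfolding a b sin_add sin_diff by (simp add: algebra_simps)
  qed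
  have "poly (cheb_U (Suc (Suc m))) (cos t) * sin t = 2 * cos t * (poly (cheb_U (Suc m)) (cos t) * sin t) - poly (cheb_U m) (cos t) * sin t"
    by (simp add: algebra_simps)
  also have "\<dots> = 2 * cos t * sin (real (Suc (Suc m)) * t) - sin (real (Suc m) * t)" using 3 by simp
  finally show ?case using e by simp
qed

lemma deg_U: "degree (cheb_U m) \<le> m"
proof (induction m rule: cheb_U.induct)
  case (3 m)
  have "degree ([:0, 2:] * cheb_U (Suc m)) \<le> Suc (Suc m)"
    using degree_mult_le[of "[:0, 2:]" "cheb_U (Suc m)"] 3 by simp
  moreover have "degree (cheb_U m) \<le> Suc (Suc m)" using 3 by simp
  ultimately show ?case by (simp add: degree_diff_le)
qed auto

lemma U_deriv:
  "poly (pderiv (cheb_U m)) (cos t) * (- sin t) * sin t + poly (cheb_U m) (cos t) * cos t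
     = real (Suc m) * cos (real (Suc m) * t)"
proof -
  have d1: "((\<lambda>t. poly (cheb_U m) (cos t) * sin t) has_real_derivative
      (poly (pderiv (cheb_U m)) (cos t) * (- sin t) * sin t + poly (cheb_U m) (cos t) * cos t)) (at t)"
    by (auto intro!: derivative_eq_intros DERIV_chain2[OF poly_DERIV])
  have d2: "((\<lambda>t. sin (real (Suc m) * t)) has_real_derivative real (Suc m) * cos (real (Suc m) * t)) (at t)"
    by (auto intro!: derivative_eq_intros)
  from d1 have d1': "((\<lambda>t. sin (real (Suc m) * t)) has_real_derivative
      (poly (pderiv (cheb_U m)) (cos t) * (- sin t) * sin t + poly (cheb_U m) (cos t) * cos t)) (at t)"
    by (simp add: cheb_U_sin)
  show ?thesis using DERIV_unique[OF d1' d2] .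
qed

definition HH :: "nat \<Rightarrow> real \<Rightarrow> real" where
  "HH n t = cos t * sin (2 * real n * t) - 2 * real n * cos (2 * real n * t) * sin t"

lemma key_U':
  assumes "n \<ge> 1"
  shows "(sin t)^3 * poly (pderiv (cheb_U (2*n-1))) (cos t) = HH n t"
proof -
  have sm: "real (Suc (2*n-1)) = 2 * real n" using assms by simp
  have d: "poly (pderiv (cheb_U (2*n-1))) (cos t) * (- sin t) * sin t + poly (cheb_U (2*n-1)) (cos t) * cos t
     = 2 * real n * cos (2 * real n * t)" using U_deriv[of "2*n-1" t] unfolding sm .
  have u: "poly (cheb_U (2*n-1)) (cos t) * sin t = sin (2 * real n * t)" using cheb_U_sin[of "2*n-1" t] unfolding sm .
  have "sin t * (poly (pderiv (cheb_U (2*n-1))) (cos t) * (- sin t) * sin t + poly (cheb_U (2*n-1)) (cos t) * cos t)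
     = sin t * (2 * real n * cos (2 * real n * t))" using d by simp
  then have "cos t * (poly (cheb_U (2*n-1)) (cos t) * sin t) - (sin t)^3 * poly (pderiv (cheb_U (2*n-1))) (cos t)
     = sin t * (2 * real n * cos (2 * real n * t))" by (simp add: algebra_simps power3_eq_cube)
  then show ?thesis unfolding u HH_def by (simp add: algebra_simps)
qed

lemma R_cos:
  assumes "n \<ge> 1"
  shows "poly (smult (2 * real n - 1) (cheb_T (2*n + 1)) + smult (2 * real n + 1) (cheb_T (2*n - 1))) (cos t)
     = 2 * (2 * real n * cos (2 * real n * t) * cos t + sin (2 * real n * t) * sin t)"
proof -
  have a: "real (2*n+1) * t = 2 * real n * t + t" by (simp add: algebra_simps)
  have b: "real (2*n-1) * t = 2 * real n * t - t" using assms by (simp add: algebra_simps of_nat_diff)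
  have c1: "poly (cheb_T (2*n+1)) (cos t) = cos (2 * real n * t) * cos t - sin (2 * real n * t) * sin t"
    unfolding cheb_T_cos a cos_add ..
  have c2: "poly (cheb_T (2*n-1)) (cos t) = cos (2 * real n * t) * cos t + sin (2 * real n * t) * sin t"
    unfolding cheb_T_cos b cos_diff ..
  show ?thesis unfolding poly_add poly_smult c1 c2 by (simp add: algebra_simps)
qed

lemma sign_change_root:
  fixes f :: "real \<Rightarrow> real"
  assumes "continuous_on {a..b} f" "a \<le> b" "f a * f b < 0"
  shows "\<exists>x. a < x \<and> x < b \<and> f x = 0"
proof -
  have "\<exists>x. a \<le> x \<and> x \<le> b \<and> f x = 0"
  proof (cases "f a < 0")
    case True
    then have "f b > 0" using assms(3) by (simp add: mult_less_0_iff)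
    then show ?thesis using IVT'[of f a 0 b] True assms by auto
  next
    case False
    then have "f a > 0" "f b < 0" using assms(3) by (auto simp add: mult_less_0_iff)
    then show ?thesis using IVT2'[of f b 0 a] assms by auto
  qed
  then obtain x where "a \<le> x" "x \<le> b" "f x = 0" by blast
  moreover have "x \<noteq> a" "x \<noteq> b" using assms(3) \<open>f x = 0\<close> by auto
  ultimately show ?thesis by (intro exI[of _ x]) auto
qed

lemma HH_grid:
  assumes "n \<ge> 1"
  shows "HH n (real j * pi / (2 * real n)) = - 2 * real n * (-1)^j * sin (real j * pi / (2 * real n))"
proof -
  have "2 * real n * (real j * pi / (2 * real n)) = real j * pi" using assms by (simp add: field_simps)
  then show ?thesis unfolding HH_def by simp
qed

lemma HH_cont: "continuous_on S (HH n)"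
  unfolding HH_def by (intro continuous_intros)

lemma roots_loc:
  assumes n2: "n \<ge> 2" and z: "\<zeta> > 0" "poly (pderiv (cheb_U (2*n - 1))) \<zeta> = 0"
    and e: "0 < \<eta>" "\<eta> < \<zeta>" "poly (pderiv (cheb_U (2*n - 1))) \<eta> = 0"
  shows "\<exists>\<theta>. pi / (2 * real n) < \<theta> \<and> \<theta> < pi / 2 - pi / (2 * real n) \<and> cos \<theta> = \<zeta> \<and> HH n \<theta> = 0"
proof -
  define p where "p = pderiv (cheb_U (2*n - 1))"
  define a where "a = (\<lambda>j::nat. real j * pi / (2 * real n))"
  have n1: "n \<ge> 1" using n2 by simp
  have npos: "real n > 0" using n2 by simp
  have a_mono: "a j < a k" if "j < k" for j k
    using that npos unfolding a_def by (simp add: divide_strict_right_mono)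
  have a_le: "a j \<le> a k" if "j \<le> k" for j k
    using that npos unfolding a_def by (simp add: divide_right_mono)
  have a_pos: "0 < a j" if "j \<ge> 1" for j
    using that npos unfolding a_def by simp
  have a_lt_pi: "a j < pi" if "j < 2 * n" for j
  proof -
    have "real j < 2 * real n" using that by linarith
    then have "real j * pi < 2 * real n * pi" by simp
    then show ?thesis unfolding a_def using npos by (simp add: field_simps)
  qed
  have a_half: "a n = pi / 2" unfolding a_def using npos by simp
  have sin_a: "sin (a j) > 0" if "1 \<le> j" "j < 2 * n" for j
    using sin_gt_zero[OF a_pos[OF that(1)] a_lt_pi[OF that(2)]] .
  have Ha: "HH n (a j) = - 2 * real n * (-1)^j * sin (a j)" for j
    unfolding a_def using HH_grid[OF n1] .
  have ex: "\<exists>\<theta>. a j < \<theta> \<and> \<theta> < a (Suc j) \<and> HH n \<theta> = 0" if j: "j \<in> {1..2*n-2}" for j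
  proof (rule sign_change_root[OF HH_cont])
    show "a j \<le> a (Suc j)" using a_le by simp
    have s1: "sin (a j) > 0" using sin_a j n2 by auto
    have s2: "sin (a (Suc j)) > 0" using sin_a j n2 by auto
    have "HH n (a j) * HH n (a (Suc j)) = - (4 * real n ^ 2 * sin (a j) * sin (a (Suc j)))"
      unfolding Ha by (simp add: power2_eq_square algebra_simps)
    also have "\<dots> < 0" using s1 s2 npos by simp
    finally show "HH n (a j) * HH n (a (Suc j)) < 0" .
  qed
  then obtain th where th: "\<And>j. j \<in> {1..2*n-2} \<Longrightarrow> a j < th j \<and> th j < a (Suc j) \<and> HH n (th j) = 0"
    by metis
  have th_pos: "0 < th j" "th j < pi" if "j \<in> {1..2*n-2}" for j
  proof -
    show "0 < th j" using th[OF that] a_pos[of j] that by auto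
    have "a (Suc j) < pi" using a_lt_pi[of "Suc j"] that by auto
    then show "th j < pi" using th[OF that] by auto
  qed
  have th_mono: "th j < th k" if "j \<in> {1..2*n-2}" "k \<in> {1..2*n-2}" "j < k" for j k
    using th[OF that(1)] th[OF that(2)] a_le[of "Suc j" k] that(3) by auto
  have root_iff: "poly p (cos t) = 0 \<longleftrightarrow> HH n t = 0" if "0 < t" "t < pi" for t
  proof -
    have "sin t > 0" using sin_gt_zero that by blast
    then show ?thesis using key_U'[OF n1, of t] unfolding p_def by auto
  qed
  define S where "S = (\<lambda>j. cos (th j)) ` {1..2*n-2}"
  have S_sub: "S \<subseteq> {x. poly p x = 0}"
    unfolding S_def using th th_pos root_iff by auto
  have inj: "inj_on (\<lambda>j. cos (th j)) {1..2*n-2}"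
  proof (rule linorder_inj_onI)
    fix j k assume jk: "j < k" "j \<in> {1..2*n-2}" "k \<in> {1..2*n-2}"
    have "cos (th k) < cos (th j)"
      using cos_mono_less_eq[of "th k" "th j"] th_pos[OF jk(2)] th_pos[OF jk(3)] th_mono[OF jk(2,3,1)] by auto
    then show "cos (th j) \<noteq> cos (th k)" by simp
  qed auto
  have cardS: "card S = 2*n-2" unfolding S_def using card_image[OF inj] by simp
  have p0: "p \<noteq> 0"
  proof
    assume "p = 0"
    then have "poly p (cos (a 1)) = 0" by simp
    moreover have "0 < a 1" "a 1 < pi" using a_pos[of 1] a_lt_pi[of 1] n2 by auto
    ultimately have "HH n (a 1) = 0" using root_iff by blast
    moreover have "sin (a 1) > 0" using sin_a[of 1] n2 by auto
    ultimately show False unfolding Ha using npos by simp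
  qed
  have degp: "degree p \<le> 2*n-2"
    unfolding p_def degree_pderiv using deg_U[of "2*n-1"] by simp
  have fin: "finite {x. poly p x = 0}" using poly_roots_finite[OF p0] .
  have "card {x. poly p x = 0} \<le> 2*n-2" using card_poly_roots_bound[OF p0] degp by simp
  then have Seq: "S = {x. poly p x = 0}"
    using card_subset_eq[OF fin S_sub] card_mono[OF fin S_sub] cardS by simp
  have "\<zeta> \<in> S" using z Seq unfolding p_def by auto
  then obtain j where j: "j \<in> {1..2*n-2}" "\<zeta> = cos (th j)" unfolding S_def by blast
  have "\<eta> \<in> S" using e Seq unfolding p_def by auto
  then obtain k where k: "k \<in> {1..2*n-2}" "\<eta> = cos (th k)" unfolding S_def by blast
  have lt_half: "th i < pi / 2" if "i \<in> {1..2*n-2}" "cos (th i) > 0" for i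
  proof (rule ccontr)
    assume "\<not> th i < pi / 2"
    then have "cos (th i) \<le> cos (pi/2)"
      using cos_monotone_0_pi_le[of "pi/2" "th i"] th_pos[OF that(1)] by auto
    then show False using that by simp
  qed
  have thj: "th j < th k"
  proof -
    have "cos (th k) < cos (th j)" using e j k by simp
    then show ?thesis using cos_mono_less_eq[of "th j" "th k"] th_pos[OF j(1)] th_pos[OF k(1)]
      by (cases "th j = th k") auto
  qed
  have jk: "j < k"
  proof (rule ccontr)
    assume "\<not> j < k"
    then have "k < j \<or> k = j" by auto
    then show False using th_mono[OF k(1) j(1)] thj by auto
  qed
  have "a k < pi / 2" using th[OF k(1)] lt_half[OF k(1)] e k by auto
  then have "k < n" using a_le[of n k] a_half by (metis not_le)
  then have "a (Suc j) \<le> a (n - 1)" using a_le jk by simp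
  moreover have "a (n - 1) = pi / 2 - pi / (2 * real n)"
    unfolding a_def using npos n2 by (simp add: of_nat_diff field_simps)
  moreover have "a 1 \<le> a j" using a_le j by simp
  moreover have "a 1 = pi / (2 * real n)" unfolding a_def by simp
  ultimately show ?thesis using th[OF j(1)] j(2) by (intro exI[of _ "th j"]) auto
qed



lemma tan_ge_self: assumes "0 \<le> x" "x < pi/2" shows "x \<le> tan x"
proof -
  have "0 \<le> tan x" using tan_pos_pi2_le assms by blast
  then have "arctan (tan x) \<le> tan x" by (rule arctan_le_self)
  moreover have "arctan (tan x) = x" using assms by (intro arctan_tan) auto
  ultimately show ?thesis by simp
qed

lemma sin_arctan': "sin (arctan x) = x * cos (arctan x)"
proof -
  have "tan (arctan x) = x" by (rule tan_arctan)
  then show ?thesis unfolding tan_def using cos_arctan_not_zero[of x] by (simp add: field_simps)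
qed

lemma cos_arctan_pos: "cos (arctan x) > 0"
  using cos_gt_zero_pi arctan_lbound arctan_ubound by blast

lemma one_minus_cos_le: "1 - cos (d::real) \<le> d^2 / 2"
proof -
  have "cos d = 1 - 2 * sin (d/2) ^ 2" using cos_double_sin[of "d/2"] by simp
  moreover have "\<bar>sin (d/2)\<bar> \<le> \<bar>d/2\<bar>" by (rule abs_sin_x_le_abs_x)
  then have "sin (d/2) ^ 2 \<le> (d/2)^2" by (metis power2_abs power_mono abs_ge_zero)
  ultimately show ?thesis by (simp add: power2_eq_square field_simps)
qed

definition GG :: "real \<Rightarrow> real \<Rightarrow> real" where
  "GG nn t = 2 * nn * cos (2 * nn * t) * cos t + sin (2 * nn * t) * sin t"

lemma analytic:
  fixes nn :: real
  assumes n100: "nn \<ge> 100" and th0: "pi / (2 * nn) < t0" "t0 < pi / 2 - pi / (2 * nn)"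
    and H0: "cos t0 * sin (2 * nn * t0) - 2 * nn * cos (2 * nn * t0) * sin t0 = 0"
  shows "\<exists>t1. t0 < t1 \<and> t1 < pi/2 \<and> cos t0 - cos t1 \<le> 2 / (5 * nn^2 * cos t0) \<and> GG nn t0 * GG nn t1 \<le> 0 \<and> GG nn t0 \<noteq> 0"
proof -
  have pi3: "pi > 3" by (rule pi_gt3)
  have npos: "nn > 0" using n100 by simp
  define c0 where "c0 = cos t0"
  define s0 where "s0 = sin t0"
  define S where "S = sin (2 * nn * t0)"
  define C where "C = cos (2 * nn * t0)"
  have pin: "pi / (2 * nn) > 0" using npos by simp
  have t0pos: "0 < t0" using th0 pin by linarith
  have t0lt: "t0 < pi/2" using th0 pin by linarith
  have c0pos: "c0 > 0" unfolding c0_def using cos_gt_zero_pi t0pos t0lt by simp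
  have s0pos: "s0 > 0" unfolding s0_def using sin_gt_zero t0pos t0lt pi3 by simp
  have sc: "s0^2 + c0^2 = 1" unfolding s0_def c0_def by simp
  have SC: "S^2 + C^2 = 1" unfolding S_def C_def by simp
  have H0': "c0 * S = 2 * nn * C * s0" using H0 unfolding c0_def S_def C_def s0_def by simp
  have Sne: "S \<noteq> 0"
  proof
    assume "S = 0"
    then have "C = 0" using H0' npos s0pos by simp
    then show False using SC \<open>S = 0\<close> by simp
  qed
  have G0: "GG nn t0 * s0 = S"
  proof -
    have "GG nn t0 * s0 = c0 * (2 * nn * C * s0) + S * s0^2"
      unfolding GG_def c0_def s0_def C_def S_def by (simp add: power2_eq_square algebra_simps)
    also have "\<dots> = S * (c0^2 + s0^2)" unfolding H0'[symmetric] by (simp add: power2_eq_square algebra_simps)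
    finally show ?thesis using sc by simp
  qed
  have G0ne: "GG nn t0 \<noteq> 0" using G0 Sne by auto
  have SG0: "S * GG nn t0 > 0"
  proof -
    have "S * GG nn t0 * s0 = S^2" using G0 by (simp add: power2_eq_square algebra_simps)
    then have "S * GG nn t0 = S^2 / s0" using s0pos by (simp add: field_simps)
    then show ?thesis using Sne s0pos by simp
  qed
  define q where "q = C / S"
  have qdef: "q = c0 / (2 * nn * s0)" unfolding q_def using H0' Sne npos s0pos by (simp add: field_simps)
  have CqS: "C = q * S" unfolding q_def using Sne by simp
  have t0_le_tan: "t0 \<le> s0 / c0" unfolding s0_def c0_def using tan_ge_self[of t0] t0pos t0lt by (simp add: tan_def)
  have q_lt: "q < 1/3"
  proof -
    have "3 / (2*nn) < t0" using th0 pi3 npos by (smt (verit) divide_strict_right_mono)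
    then have "3 / (2*nn) < s0 / c0" using t0_le_tan by simp
    then have "3 * c0 < 2 * nn * s0" using c0pos npos by (simp add: field_simps)
    then show ?thesis unfolding qdef using npos s0pos by (simp add: field_simps)
  qed
  have qpos: "q > 0" unfolding qdef using c0pos s0pos npos by simp
  define b where "b = 2 / (5 * nn)"
  define v where "v = pi/2 - t0 - b"
  have bpos: "b > 0" unfolding b_def using npos by simp
  have b_small: "b \<le> 1/250" unfolding b_def using n100 by (simp add: field_simps)
  have v_lb: "v > 11 / (10 * nn)"
  proof -
    have "pi / (2*nn) - b > 11 / (10 * nn)" unfolding b_def using pi3 npos by (simp add: field_simps)
    then show ?thesis unfolding v_def using th0 by linarith
  qed
  have vpos: "v > 0" using v_lb npos by (smt (verit) divide_pos_pos)
  have v_lt: "v < pi/2" unfolding v_def using t0pos bpos by linarith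
  have sv: "sin v > 0" using sin_gt_zero vpos v_lt pi3 by simp
  have cv: "cos v > 0" using cos_gt_zero_pi vpos v_lt by simp
  define T where "T = cos v / sin v"
  have Tpos: "T > 0" unfolding T_def using sv cv by simp
  have T_eq: "T = tan (t0 + b)"
  proof -
    have "t0 + b = pi/2 - v" unfolding v_def by simp
    moreover have "sin (pi/2 - v) = cos v" by (simp add: sin_diff)
    moreover have "cos (pi/2 - v) = sin v" by (simp add: cos_diff)
    ultimately show ?thesis unfolding T_def tan_def by simp
  qed
  have T_le: "T \<le> 1 / v"
  proof -
    have "v \<le> sin v / cos v" using tan_ge_self[of v] vpos v_lt by (simp add: tan_def)
    then have "v * cos v \<le> sin v" using cv by (simp add: field_simps)
    then show ?thesis unfolding T_def using sv vpos by (simp add: field_simps)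
  qed
  have Tn: "T / (2 * nn) < 5 / 11"
  proof -
    have "1 / v < 10 * nn / 11" using v_lb npos vpos by (simp add: field_simps)
    then have "T < 10 * nn / 11" using T_le by simp
    then show ?thesis using npos by (simp add: field_simps)
  qed
  have bT: "b * T < 4 / 11"
  proof -
    have "b * T \<le> b * (1 / v)" using T_le bpos by (intro mult_left_mono) auto
    also have "\<dots> = b / v" by simp
    also have "b / v < 4 / 11" unfolding b_def using v_lb npos vpos by (simp add: field_simps)
    finally show ?thesis .
  qed
  define k where "k = T / (2 * nn)"
  have kpos: "k > 0" unfolding k_def using Tpos npos by simp
  define eta where "eta = arctan q"
  define eps where "eps = arctan k"
  have eta_pos: "eta > 0" unfolding eta_def using qpos by simp
  have eps_pos: "eps > 0" unfolding eps_def using kpos by simp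
  have eta_le: "eta \<le> q" unfolding eta_def using arctan_le_self qpos by simp
  have eps_le: "eps \<le> k" unfolding eps_def using arctan_le_self kpos by simp
  define D where "D = (eta + eps) / (2 * nn)"
  define t1 where "t1 = t0 + D"
  have Dpos: "D > 0" unfolding D_def using eta_pos eps_pos npos by simp
  have D_le: "D \<le> b"
  proof -
    have "eta + eps \<le> 4/5" using eta_le eps_le q_lt Tn unfolding k_def by linarith
    then have "(eta + eps) * nn \<le> (4/5) * nn" using npos by (intro mult_right_mono) auto
    then show ?thesis unfolding D_def b_def using npos by (simp add: field_simps)
  qed
  have t1_lt: "t1 < pi/2" unfolding t1_def using D_le vpos unfolding v_def by linarith
  have c1pos: "cos t1 > 0" using cos_gt_zero_pi t1_lt t0pos Dpos unfolding t1_def by simp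
  have tan1: "tan t1 \<le> T" unfolding T_eq
    using tan_mono_le[of t1 "t0 + b"] t0pos Dpos D_le vpos unfolding t1_def v_def by simp
  have s1le: "sin t1 \<le> T * cos t1" using tan1 c1pos unfolding tan_def by (simp add: field_simps)
  define ce where "ce = cos eta"
  define ke where "ke = cos eps"
  have ce_pos: "ce > 0" unfolding ce_def eta_def by (rule cos_arctan_pos)
  have ke_pos: "ke > 0" unfolding ke_def eps_def by (rule cos_arctan_pos)
  have se: "sin eta = q * ce" unfolding ce_def eta_def by (rule sin_arctan')
  have sk: "sin eps = k * ke" unfolding ke_def eps_def by (rule sin_arctan')
  have phi1: "2 * nn * t1 = 2 * nn * t0 + (eta + eps)" unfolding t1_def D_def using npos by (simp add: field_simps)
  have SG1: "S * GG nn t1 = S^2 * ce * ke * (1 + q^2) * (sin t1 - T * cos t1)"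
  proof -
    have sa: "sin (eta + eps) = q * ce * ke + ce * k * ke" unfolding sin_add se sk ce_def ke_def by simp
    have ca: "cos (eta + eps) = ce * ke - q * ce * k * ke" unfolding cos_add se sk ce_def ke_def by simp
    have s2: "sin (2 * nn * t1) = S * cos (eta + eps) + C * sin (eta + eps)"
      unfolding phi1 sin_add S_def C_def ..
    have c2: "cos (2 * nn * t1) = C * cos (eta + eps) - S * sin (eta + eps)"
      unfolding phi1 cos_add S_def C_def ..
    have kk: "T = 2 * nn * k" unfolding k_def using npos by simp
    show ?thesis unfolding GG_def s2 c2 sa ca CqS kk power2_eq_square by algebra
  qed
  have SG1le: "S * GG nn t1 \<le> 0"
    unfolding SG1 using s1le ce_pos ke_pos by (simp add: mult_nonneg_nonpos)
  have prod: "GG nn t0 * GG nn t1 \<le> 0"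
  proof -
    have "(S * GG nn t0) * (S * GG nn t1) \<le> 0" using SG0 SG1le by (simp add: mult_nonneg_nonpos)
    then have "S^2 * (GG nn t0 * GG nn t1) \<le> 0" by (simp add: power2_eq_square algebra_simps)
    then show ?thesis using Sne by (simp add: mult_le_0_iff)
  qed
  have c0le: "c0 \<le> 1" unfolding c0_def by simp
  have s0le: "s0 \<le> 1" unfolding s0_def by simp
  have dist1: "cos t0 - cos t1 \<le> c0 * D^2 / 2 + s0 * D"
  proof -
    have "cos t0 - cos t1 = c0 * (1 - cos D) + s0 * sin D"
      unfolding t1_def cos_add c0_def s0_def by (simp add: algebra_simps)
    moreover have "c0 * (1 - cos D) \<le> c0 * (D^2 / 2)"
      using one_minus_cos_le[of D] c0pos by (intro mult_left_mono) auto
    moreover have "s0 * sin D \<le> s0 * D"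
      using sin_x_le_x[of D] Dpos s0pos by (intro mult_left_mono) auto
    ultimately show ?thesis by simp
  qed
  have s0q: "s0 * q = c0 / (2 * nn)" unfolding qdef using s0pos npos by (simp add: field_simps)
  have A1: "2 * nn * (s0 * D) \<le> (c0 + s0 * T) / (2 * nn)"
  proof -
    have "2 * nn * (s0 * D) = s0 * eta + s0 * eps" unfolding D_def using npos by (simp add: field_simps)
    also have "\<dots> \<le> s0 * q + s0 * k"
      using eta_le eps_le s0pos by (intro add_mono mult_left_mono) auto
    also have "\<dots> = (c0 + s0 * T) / (2 * nn)" unfolding s0q k_def using npos by (simp add: field_simps)
    finally show ?thesis .
  qed
  have cvle: "cos v \<le> s0 + c0 * b"
  proof -
    have "v = (pi/2 - t0) - b" unfolding v_def by simp
    then have "cos v = cos (pi/2 - t0) * cos b + sin (pi/2 - t0) * sin b" by (simp add: cos_diff)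
    also have "\<dots> = s0 * cos b + c0 * sin b" unfolding s0_def c0_def by (simp add: cos_diff sin_diff)
    also have "\<dots> \<le> s0 * 1 + c0 * b"
      using s0pos c0pos sin_x_le_x[of b] bpos by (intro add_mono mult_left_mono) auto
    finally show ?thesis by simp
  qed
  have c0T: "c0 * T \<le> (15/11) * cos v"
  proof -
    have "pi/2 - t0 = v + b" unfolding v_def by simp
    then have "c0 = sin (v + b)" unfolding c0_def by (metis sin_diff sin_pi_half cos_pi_half mult_1 mult_zero_left diff_zero)
    also have "\<dots> = sin v * cos b + cos v * sin b" by (rule sin_add)
    also have "\<dots> \<le> sin v * 1 + cos v * b"
      using sv cv sin_x_le_x[of b] bpos by (intro add_mono mult_left_mono) auto
    finally have "c0 \<le> sin v + cos v * b" by simp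
    then have "c0 * T \<le> (sin v + cos v * b) * T" using Tpos by (intro mult_right_mono) auto
    also have "\<dots> = cos v * (1 + b * T)" unfolding T_def using sv by (simp add: field_simps)
    also have "\<dots> \<le> cos v * (15/11)" using bT cv by (intro mult_left_mono) auto
    finally show ?thesis by simp
  qed
  have c0T1: "c0 * T \<le> 15/11" using c0T cos_le_one[of v] by linarith
  have B1: "c0 * (c0 + s0 * T) \<le> (15/11) * (1 + b)"
  proof -
    have "c0 * (c0 + s0 * T) = c0^2 + s0 * (c0 * T)" by (simp add: power2_eq_square algebra_simps)
    also have "\<dots> \<le> c0^2 + s0 * ((15/11) * (s0 + c0 * b))"
    proof -
      have "(15/11) * cos v \<le> (15/11) * (s0 + c0 * b)" using cvle by (intro mult_left_mono) auto
      then have "c0 * T \<le> (15/11) * (s0 + c0 * b)" using c0T by linarith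
      then show ?thesis using s0pos by (intro add_left_mono mult_left_mono) auto
    qed
    also have "\<dots> = c0^2 + (15/11) * s0^2 + (15/11) * (s0 * c0) * b" by (simp add: power2_eq_square algebra_simps)
    also have "\<dots> \<le> c0^2 + (15/11) * s0^2 + (15/11) * 1 * b"
      using s0pos c0pos s0le c0le bpos by (intro add_mono mult_right_mono mult_left_mono order_refl) (auto simp: mult_le_one)
    also have "\<dots> \<le> (15/11) * (1 + b)"
    proof -
      have "11 * c0^2 + 15 * s0^2 \<le> 15" using sc zero_le_power2[of c0] by linarith
      then show ?thesis by (simp add: algebra_simps)
    qed
    finally show ?thesis .
  qed
  have X: "2 * nn * (c0 * D) \<le> 1/3 + (15/11) / (2 * nn)"
  proof -
    have "2 * nn * (c0 * D) = c0 * eta + c0 * eps" unfolding D_def using npos by (simp add: field_simps)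
    also have "\<dots> \<le> c0 * q + c0 * k"
      using eta_le eps_le c0pos by (intro add_mono mult_left_mono) auto
    also have "\<dots> \<le> 1 * q + (c0 * T) / (2 * nn)"
      unfolding k_def using c0le qpos by (intro add_mono mult_right_mono) auto
    also have "\<dots> \<le> 1/3 + (15/11) / (2 * nn)"
      using q_lt c0T1 npos by (intro add_mono divide_right_mono) auto
    finally show ?thesis .
  qed
  have X0: "2 * nn * (c0 * D) \<ge> 0" using npos c0pos Dpos by simp
  have Xb: "(2 * nn * (c0 * D))^2 \<le> (1/3 + 15/2200)^2"
  proof -
    have "(15/11) / (2 * nn) \<le> 15/2200" using n100 by (simp add: field_simps)
    then show ?thesis using X X0 by (intro power_mono) auto
  qed
  have main: "4 * nn^2 * c0 * (c0 * D^2 / 2 + s0 * D) \<le> 8/5"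
  proof -
    have "4 * nn^2 * c0 * (c0 * D^2 / 2 + s0 * D) = (2 * nn * (c0 * D))^2 / 2 + c0 * (2 * nn * (2 * nn * (s0 * D)))"
      by (simp add: power2_eq_square algebra_simps)
    also have "c0 * (2 * nn * (2 * nn * (s0 * D))) \<le> c0 * (c0 + s0 * T)"
    proof -
      have "2 * nn * (2 * nn * (s0 * D)) \<le> 2 * nn * ((c0 + s0 * T) / (2 * nn))"
        using A1 npos by (intro mult_left_mono) auto
      then show ?thesis using npos c0pos by (intro mult_left_mono) auto
    qed
    then have "(2 * nn * (c0 * D))^2 / 2 + c0 * (2 * nn * (2 * nn * (s0 * D)))
        \<le> (1/3 + 15/2200)^2 / 2 + (15/11) * (1 + 1/250)"
    proof -
      have "15/11*(1+b) \<le> (15/11) * (1 + 1/250)" using b_small by simp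
      moreover have "(2 * nn * (c0 * D))^2 / 2 \<le> (1/3 + 15/2200)^2 / 2" using Xb by simp
      ultimately show ?thesis using B1 \<open>c0 * (2 * nn * (2 * nn * (s0 * D))) \<le> c0 * (c0 + s0 * T)\<close> by linarith
    qed
    also have "\<dots> \<le> 8/5" by (simp add: power2_eq_square)
    finally show ?thesis .
  qed
  have dist: "cos t0 - cos t1 \<le> 2 / (5 * nn^2 * cos t0)"
  proof -
    have pos: "4 * nn^2 * c0 > 0" using npos c0pos by simp
    have "c0 * D^2 / 2 + s0 * D \<le> (8/5) / (4 * nn^2 * c0)"
      using main pos by (simp add: field_simps)
    also have "\<dots> = 2 / (5 * nn^2 * cos t0)" unfolding c0_def by (simp add: field_simps)
    finally show ?thesis using dist1 by simp
  qed
  have "t0 < t1" unfolding t1_def using Dpos by simp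
  then show ?thesis using dist prod G0ne t1_lt by (intro exI[of _ t1]) auto
qed

theorem mainTheorem5:
  "\<exists>N::nat. \<forall>n\<ge>N.
     \<forall>\<zeta>::real.
       (\<zeta> > 0 \<and> poly (pderiv (cheb_U (2*n - 1))) \<zeta> = 0 \<and>
        (\<exists>\<eta>. 0 < \<eta> \<and> \<eta> < \<zeta> \<and> poly (pderiv (cheb_U (2*n - 1))) \<eta> = 0))
       \<longrightarrow> (\<exists>x. \<zeta> - 2 / (5 * (real n)^2 * \<zeta>) \<le> x \<and> x < \<zeta> \<and>
               poly (smult (2 * real n - 1) (cheb_T (2*n + 1)) +
                     smult (2 * real n + 1) (cheb_T (2*n - 1))) x = 0)"
proof (rule exI[of _ 100], intro allI impI)
  fix n :: nat and z :: real
  assume n: "n \<ge> 100"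
  assume hyp: "z > 0 \<and> poly (pderiv (cheb_U (2*n - 1))) z = 0 \<and>
        (\<exists>\<eta>. 0 < \<eta> \<and> \<eta> < z \<and> poly (pderiv (cheb_U (2*n - 1))) \<eta> = 0)"
  define Rp where "Rp = smult (2 * real n - 1) (cheb_T (2*n + 1)) + smult (2 * real n + 1) (cheb_T (2*n - 1))"
  have n1: "n \<ge> 1" "n \<ge> 2" using n by auto
  obtain e where e: "0 < e" "e < z" "poly (pderiv (cheb_U (2*n - 1))) e = 0" using hyp by blast
  obtain t0 where t0: "pi / (2 * real n) < t0" "t0 < pi / 2 - pi / (2 * real n)" "cos t0 = z" "HH n t0 = 0"
    using roots_loc[OF n1(2) _ _ e] hyp by blast
  have nn: "real n \<ge> 100" using n by simp
  obtain t1 where t1: "t0 < t1" "t1 < pi/2" "cos t0 - cos t1 \<le> 2 / (5 * (real n)^2 * cos t0)"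
      "GG (real n) t0 * GG (real n) t1 \<le> 0" "GG (real n) t0 \<noteq> 0"
    using analytic[OF nn t0(1,2)] t0(4) unfolding HH_def by blast
  have Rc: "poly Rp (cos t) = 2 * GG (real n) t" for t
    unfolding Rp_def R_cos[OF n1(1)] GG_def by simp
  have pin: "pi / (2 * real n) > 0" using n by simp
  have x1z: "cos t1 < z"
  proof -
    have "cos t1 < cos t0" using cos_mono_less_eq[of t1 t0] t0(1) t1(1,2) pin by auto
    then show ?thesis using t0(3) by simp
  qed
  have Rz: "poly Rp z \<noteq> 0" using Rc[of t0] t0(3) t1(5) by simp
  have prodR: "poly Rp (cos t1) * poly Rp z \<le> 0"
  proof -
    have "poly Rp (cos t1) * poly Rp z = 4 * (GG (real n) t0 * GG (real n) t1)"
      using Rc[of t0] Rc[of t1] t0(3) by simp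
    then show ?thesis using t1(4) by simp
  qed
  have "\<exists>x. cos t1 \<le> x \<and> x < z \<and> poly Rp x = 0"
  proof (cases "poly Rp (cos t1) = 0")
    case True
    then show ?thesis using x1z by blast
  next
    case False
    then have "poly Rp (cos t1) * poly Rp z < 0" using prodR Rz
      by (simp add: less_le mult_eq_0_iff)
    moreover have "continuous_on {cos t1..z} (poly Rp)" by (intro continuous_intros)
    ultimately obtain x where "cos t1 < x" "x < z" "poly Rp x = 0"
      using sign_change_root[of "cos t1" z "poly Rp"] x1z by auto
    then show ?thesis by (intro exI[of _ x]) auto
  qed
  then obtain x where x: "cos t1 \<le> x" "x < z" "poly Rp x = 0" by blast
  have "z - 2 / (5 * (real n)^2 * z) \<le> x" using t1(3) t0(3) x(1) by simp
  then show "\<exists>x. z - 2 / (5 * (real n)^2 * z) \<le> x \<and> x < z \<and>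
               poly (smult (2 * real n - 1) (cheb_T (2*n + 1)) +
                     smult (2 * real n + 1) (cheb_T (2*n - 1))) x = 0"
    using x unfolding Rp_def by blast
qed

end
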